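(* Assume $\Omega_{\mathrm O}$ and $\Omega_{\mathrm I}$ satisfy the standing assumptions (1)–(5). Then for every $\psi\in\boldsymbol{A}^{\circ}_\Omega$ one has $\langle\psi\rangle_{\mathbb T}\notin\operatorname{int}\operatorname{conv}\Omega_{\mathrm I}$.
   Context: Let $d\ge1$. $\Omega_{\mathrm O}\subset\mathbb R^d$ is a nonempty open strictly convex set and $\Omega_{\mathrm I}\subset\Omega_{\mathrm O}$ is a closed set; $\operatorname{conv}$, $\operatorname{int}$, $\operatorname{cl}$, $\partial$ denote convex hull, interior, closure, boundary. A ray is a set $\{x+te: t\ge0\}$ with $e\ne0$. The standing assumptions are: (1) $\partial\operatorname{conv}\Omega_{\mathrm I}$ contains no rays; (2) $\operatorname{cl}\operatorname{conv}\Omega_{\mathrm I}\subset\Omega_{\mathrm O}$; (3) $\operatorname{int}\operatorname{conv}\Omega_{\mathrm I}\ne\varnothing$ and $\Omega_{\mathrm O}$ and $\operatorname{conv}\Omega_{\mathrm I}$ have congruent maximal inscribed cones (the set of directions $e$ such that some ray $\{x+te:t\ge0\}$ is contained in the set is the same for both sets); (4) the set $(\operatorname{int}\operatorname{conv}\Omega_{\mathrm I})\setminus\Omega_{\mathrm I}$ is a locally finite union of its connected components $\omega_j$ (every bounded subset of $\mathbb R^d$ meets only finitely many $\omega_j$); (5) for every $j$ there is a supporting hyperplane $L_j$ to $\operatorname{conv}\Omega_{\mathrm I}$ that contains $E_j:=\partial\omega_j\setminus\Omega_{\mathrm I}$. Set $\Omega=\operatorname{cl}\Omega_{\mathrm O}\setminus\Omega_{\mathrm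 I}$. For a Borel set $E$ of finite positive measure and an $\mathbb R^d$-valued summable function $\psi$, $\langle\psi\rangle_E=|E|^{-1}\int_E\psi$ (coordinate-wise). $\mathbb T=\mathbb R/\mathbb Z$; a function $\psi$ on $\mathbb T$ is identified with its $1$-periodic version $\psi_{\mathrm{per}}$ on $\mathbb R$, and $\langle\psi\rangle_{\mathbb T}=\int_0^1\psi_{\mathrm{per}}$. Define $\boldsymbol{A}^{\circ}_\Omega=\{\psi\in L_1(\mathbb T,\mathbb R^d): \psi(x)\in\partial\Omega_{\mathrm O}\ \forall x\in\mathbb T,\ \langle\psi_{\mathrm{per}}\rangle_J\notin\Omega_{\mathrm I}\text{ for every bounded interval }J\subset\mathbb R\}$. *)

theory Defs
  imports "HOL-Analysis.Analysis"
begin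

definition strictly_convex_set :: "'a::euclidean_space set \<Rightarrow> bool" where
  "strictly_convex_set S \<longleftrightarrow> convex S \<and>
     (\<forall>x\<in>closure S. \<forall>y\<in>closure S. x \<noteq> y \<longrightarrow> open_segment x y \<subseteq> interior S)"

definition ray :: "'a::euclidean_space \<Rightarrow> 'a \<Rightarrow> 'a set" where
  "ray x e = {x + t *\<^sub>R e | t. t \<ge> 0}"

definition ray_directions :: "'a::euclidean_space set \<Rightarrow> 'a set" where
  "ray_directions S = {e. e \<noteq> 0 \<and> (\<exists>x. ray x e \<subseteq> S)}"

definition supporting_hyperplane :: "'a::euclidean_space set \<Rightarrow> 'a set \<Rightarrow> bool" where
  "supporting_hyperplane C L \<longleftrightarrow> (\<exists>a b. a \<noteq> 0 \<and> L = {y. a \<bullet> y = b} \<and>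
     (\<forall>y\<in>C. a \<bullet> y \<le> b) \<and> (\<exists>y\<in>closure C. a \<bullet> y = b))"

definition standing_assumptions :: "'a::euclidean_space set \<Rightarrow> 'a set \<Rightarrow> bool" where
  "standing_assumptions OmO OmI \<longleftrightarrow>
     OmO \<noteq> {} \<and> open OmO \<and> strictly_convex_set OmO \<and> closed OmI \<and> OmI \<subseteq> OmO \<and>
     \<comment> \<open>(1)\<close>
     \<not> (\<exists>x e. e \<noteq> 0 \<and> ray x e \<subseteq> frontier (convex hull OmI)) \<and>
     \<comment> \<open>(2)\<close>
     closure (convex hull OmI) \<subseteq> OmO \<and>
     \<comment> \<open>(3)\<close>
     interior (convex hull OmI) \<noteq> {} \<and>
     ray_directions OmO = ray_directions (convex hull OmI) \<and>
     \<comment> \<open>(4)\<close>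
     (\<forall>B. bounded B \<longrightarrow>
        finite {w \<in> components (interior (convex hull OmI) - OmI). w \<inter> B \<noteq> {}}) \<and>
     \<comment> \<open>(5)\<close>
     (\<forall>w \<in> components (interior (convex hull OmI) - OmI).
        \<exists>L. supporting_hyperplane (convex hull OmI) L \<and> frontier w - OmI \<subseteq> L)"

definition average :: "real set \<Rightarrow> (real \<Rightarrow> 'a::euclidean_space) \<Rightarrow> 'a" where
  "average E psi = (1 / measure lebesgue E) *\<^sub>R integral E psi"

text \<open>The class A-circ: functions on T = R/Z, represented by their 1-periodic versions
on R, summable over a period, with values in the boundary of OmO, and such that
averages over all bounded intervals of positive length avoid OmI.\<close>
definition A_circ :: "'a::euclidean_space set \<Rightarrow> 'a set \<Rightarrow> (real \<Rightarrow> 'a) set" where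
  "A_circ OmO OmI = {psi.
     (\<forall>x. psi (x + 1) = psi x) \<and>
     psi absolutely_integrable_on {0..1} \<and>
     (\<forall>x. psi x \<in> frontier OmO) \<and>
     (\<forall>a b. a < b \<longrightarrow> average {a..b} psi \<notin> OmI)}"

end

theory Submission
  imports Defs
begin


lemma abs_cont_integral:
  fixes h :: "real \<Rightarrow> real"
  assumes hI: "h absolutely_integrable_on {\<alpha>..\<beta>}" and h0: "\<And>x. 0 \<le> h x" and e: "e > 0"
  obtains d where "d > 0"
    "\<And>U. U \<in> sets lebesgue \<Longrightarrow> U \<subseteq> {\<alpha>..\<beta>} \<Longrightarrow> measure lebesgue U < d \<Longrightarrow> integral U h < e"
proof -
  define f where "f = (\<lambda>k::nat. \<lambda>x. min (h x) (real k))"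
  have fI: "f k absolutely_integrable_on {\<alpha>..\<beta>}" for k
  proof -
    have "(\<lambda>x. \<Sum>i\<in>Basis. min (h x \<bullet> i) ((\<lambda>x. real k) x \<bullet> i) *\<^sub>R i) absolutely_integrable_on {\<alpha>..\<beta>}"
      by (rule absolutely_integrable_min[OF hI]) auto
    then show ?thesis by (simp add: f_def)
  qed
  have hint: "h integrable_on {\<alpha>..\<beta>}" using hI set_lebesgue_integral_eq_integral(1) by blast
  have mc: "((\<lambda>k. integral {\<alpha>..\<beta>} (f k)) \<longlonglongrightarrow> integral {\<alpha>..\<beta>} h)"
  proof -
    have "h integrable_on {\<alpha>..\<beta>} \<and> ((\<lambda>k. integral {\<alpha>..\<beta>} (f k)) \<longlongrightarrow> integral {\<alpha>..\<beta>} h) sequentially"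
    proof (rule monotone_convergence_increasing)
      show "f k integrable_on {\<alpha>..\<beta>}" for k using fI set_lebesgue_integral_eq_integral(1) by blast
      show "f k x \<le> f (Suc k) x" for k x by (auto simp: f_def)
      show "((\<lambda>k. f k x) \<longlongrightarrow> h x) sequentially" for x
      proof -
        obtain N :: nat where "h x \<le> N" using real_arch_simple by blast
        then have "\<forall>k\<ge>N. f k x = h x" by (auto simp: f_def)
        then have "eventually (\<lambda>k. f k x = h x) sequentially" using eventually_sequentially by blast
        then show ?thesis by (rule tendsto_eventually)
      qed
      show "bounded (range (\<lambda>k. integral {\<alpha>..\<beta>} (f k)))"
      proof -
        have "\<bar>integral {\<alpha>..\<beta>} (f k)\<bar> \<le> integral {\<alpha>..\<beta>} h" for k
        proof -
          have "0 \<le> integral {\<alpha>..\<beta>} (f k)"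
            using fI h0 by (intro integral_nonneg) (auto simp: f_def set_lebesgue_integral_eq_integral(1))
          moreover have "integral {\<alpha>..\<beta>} (f k) \<le> integral {\<alpha>..\<beta>} h"
            using fI hint by (intro integral_le) (auto simp: f_def set_lebesgue_integral_eq_integral(1))
          ultimately show ?thesis by simp
        qed
        then show ?thesis unfolding bounded_iff by (intro exI[of _ "integral {\<alpha>..\<beta>} h"]) auto
      qed
    qed
    then show ?thesis by blast
  qed
  then obtain k where k: "integral {\<alpha>..\<beta>} h - integral {\<alpha>..\<beta>} (f k) < e/2"
  proof -
    have "e/2 > 0" using e by simp
    from LIMSEQ_D[OF mc this] obtain no where "\<forall>n\<ge>no. norm (integral {\<alpha>..\<beta>} (f n) - integral {\<alpha>..\<beta>} h) < e/2"
      by blast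
    then have "norm (integral {\<alpha>..\<beta>} (f no) - integral {\<alpha>..\<beta>} h) < e/2" by blast
    then have "integral {\<alpha>..\<beta>} h - integral {\<alpha>..\<beta>} (f no) < e/2"
      by (simp only: real_norm_def)
    then show ?thesis by (rule that)
  qed
  define d where "d = e / (2 * (real k + 1))"
  show ?thesis
  proof
    show "d > 0" using e by (simp add: d_def)
    fix U assume U: "U \<in> sets lebesgue" "U \<subseteq> {\<alpha>..\<beta>}" "measure lebesgue U < d"
    have hU: "h absolutely_integrable_on U" by (rule set_integrable_subset[OF hI U(1) U(2)])
    have fU: "f k absolutely_integrable_on U" by (rule set_integrable_subset[OF fI U(1) U(2)])
    have dU: "(\<lambda>x. h x - f k x) absolutely_integrable_on U" using hU fU by (rule set_integral_diff(1))
    have dI: "(\<lambda>x. h x - f k x) absolutely_integrable_on {\<alpha>..\<beta>}" using hI fI by (rule set_integral_diff(1))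
    have Um: "U \<in> lmeasurable"
      using fmeasurableI2[OF _ U(2) U(1)] by simp
    have iU: "h integrable_on U" "f k integrable_on U" "(\<lambda>x. h x - f k x) integrable_on U"
      using set_lebesgue_integral_eq_integral(1)[OF hU] set_lebesgue_integral_eq_integral(1)[OF fU]
        set_lebesgue_integral_eq_integral(1)[OF dU] by auto
    have iI: "(\<lambda>x. h x - f k x) integrable_on {\<alpha>..\<beta>}" "f k integrable_on {\<alpha>..\<beta>}"
      using set_lebesgue_integral_eq_integral(1)[OF dI] set_lebesgue_integral_eq_integral(1)[OF fI] by auto
    have e1: "integral U h = integral U (f k) + integral U (\<lambda>x. h x - f k x)"
      using iU by (simp add: integral_diff)
    have ck: "(\<lambda>x. real k) integrable_on U"
      using Um by (rule integrable_on_const)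
    have "integral U (f k) \<le> integral U (\<lambda>x. real k)"
      using iU(2) ck by (intro integral_le) (auto simp: f_def)
    also have "integral U (\<lambda>x. real k) = real k * measure lebesgue U"
      using integral_mult_right[of U "real k" "\<lambda>x. 1::real"] by (simp add: lmeasure_integral[OF Um])
    finally have e2: "integral U (f k) \<le> real k * measure lebesgue U" .
    have "integral U (\<lambda>x. h x - f k x) \<le> integral {\<alpha>..\<beta>} (\<lambda>x. h x - f k x)"
      using iU(3) iI(1) U(2) by (intro integral_subset_le) (auto simp: f_def)
    also have "integral {\<alpha>..\<beta>} (\<lambda>x. h x - f k x) = integral {\<alpha>..\<beta>} h - integral {\<alpha>..\<beta>} (f k)"
      using hint iI(2) by (simp add: integral_diff)
    finally have e3: "integral U (\<lambda>x. h x - f k x) \<le> integral {\<alpha>..\<beta>} h - integral {\<alpha>..\<beta>} (f k)" .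
    have "real k * measure lebesgue U \<le> real k * d"
      using U by (intro mult_left_mono) auto
    moreover have "real k * d \<le> e/2"
      using e by (simp add: d_def field_simps)
    ultimately show "integral U h < e" using k e1 e2 e3 by linarith
  qed
qed

lemma nprop:
  fixes h \<phi> :: "real \<Rightarrow> real"
  assumes hI: "h absolutely_integrable_on {\<alpha>..\<beta>}" and h0: "\<And>x. 0 \<le> h x"
    and bnd: "\<And>x y. \<alpha> \<le> x \<Longrightarrow> x \<le> y \<Longrightarrow> y \<le> \<beta> \<Longrightarrow> \<bar>\<phi> y - \<phi> x\<bar> \<le> integral {x..y} h"
    and ES: "E \<subseteq> {\<alpha>..\<beta>}" and En: "negligible E"
  shows "negligible (\<phi> ` E)"
  unfolding negligible_outer_le
proof (intro allI impI)
  fix e :: real assume e: "e > 0"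
  have hint: "h integrable_on {\<alpha>..\<beta>}" using hI set_lebesgue_integral_eq_integral(1) by blast
  obtain d where d: "d > 0"
    "\<And>U. U \<in> sets lebesgue \<Longrightarrow> U \<subseteq> {\<alpha>..\<beta>} \<Longrightarrow> measure lebesgue U < d \<Longrightarrow> integral U h < e/2"
    using abs_cont_integral[OF hI h0 half_gt_zero[OF e]] by blast
  have Em: "E \<in> lmeasurable" and E0: "measure lebesgue E = 0"
    using En negligible_imp_measurable negligible_imp_measure0 by auto
  have ES': "E \<subseteq> cbox \<alpha> \<beta>" using ES by simp
  obtain \<D> where D: "countable \<D>"
        "\<And>K. K \<in> \<D> \<Longrightarrow> K \<subseteq> cbox \<alpha> \<beta> \<and> K \<noteq> {} \<and> (\<exists>c d. K = cbox c d)"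
        "pairwise (\<lambda>A B. interior A \<inter> interior B = {}) \<D>"
        "\<And>u v. cbox u v \<in> \<D> \<Longrightarrow> \<exists>n. \<forall>i \<in> Basis. v \<bullet> i - u \<bullet> i = (\<beta> \<bullet> i - \<alpha> \<bullet> i)/2^n"
        "\<And>K. \<lbrakk>K \<in> \<D>; box \<alpha> \<beta> \<noteq> {}\<rbrakk> \<Longrightarrow> interior K \<noteq> {}"
        "E \<subseteq> \<Union>\<D>" "\<Union>\<D> \<in> lmeasurable" "measure lebesgue (\<Union>\<D>) \<le> measure lebesgue E + d/2"
    by (rule measurable_outer_intervals_bounded[OF Em ES' half_gt_zero[OF d(1)]]) blast
  have UDs: "\<Union>\<D> \<subseteq> {\<alpha>..\<beta>}" using D(2) by auto
  have UDint: "integral (\<Union>\<D>) h < e/2"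
    using d(2)[OF fmeasurableD[OF D(7)] UDs] D(8) E0 d(1) by linarith
  have hUD: "h integrable_on \<Union>\<D>"
    using set_lebesgue_integral_eq_integral(1)[OF set_integrable_subset[OF hI fmeasurableD[OF D(7)] UDs]] .
  have hsub: "h integrable_on {x..y}" if "\<alpha> \<le> x" "y \<le> \<beta>" for x y
    using integrable_on_subinterval[OF hint] that by auto
  have Dsets: "K \<in> sets lebesgue" if KD: "K \<in> \<D>" for K
  proof -
    obtain u v where "K = cbox u v" using D(2)[OF KD] by blast
    then show ?thesis by simp
  qed
  define I where "I = (\<lambda>K. cball (\<phi> (Inf K)) (integral K h))"
  have KI: "\<phi> x \<in> I K" if "K \<in> \<D>" "x \<in> K" for K x
  proof -
    obtain c d where K: "K = {c..d}" "{c..d} \<subseteq> {\<alpha>..\<beta>}" "c \<le> d"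
      using D(2)[OF \<open>K \<in> \<D>\<close>] by fastforce
    have cd: "\<alpha> \<le> c" "d \<le> \<beta>" using K by auto
    have x: "c \<le> x" "x \<le> d" using that K by auto
    have "\<bar>\<phi> x - \<phi> c\<bar> \<le> integral {c..x} h" using bnd[of c x] x cd by auto
    also have "\<dots> \<le> integral {c..d} h"
      using x cd h0 by (intro integral_subset_le hsub) auto
    finally show ?thesis using K by (simp add: I_def dist_real_def abs_minus_commute)
  qed
  have Imeas: "I K \<in> lmeasurable" for K by (simp add: I_def)
  have Ile: "measure lebesgue (I K) \<le> 2 * integral K h" for K
  proof -
    have "0 \<le> integral K h"
      by (cases "h integrable_on K") (auto simp: integral_nonneg h0 not_integrable_integral)
    then show ?thesis by (simp add: I_def cball_eq_atLeastAtMost)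
  qed
  have fin: "measure lebesgue (\<Union>K\<in>\<D>'. I K) \<le> e" if "\<D>' \<subseteq> \<D>" "finite \<D>'" for \<D>'
  proof -
    have "measure lebesgue (\<Union>K\<in>\<D>'. I K) \<le> (\<Sum>K\<in>\<D>'. measure lebesgue (I K))"
      using that by (intro measure_UNION_le) (auto simp: fmeasurableD Imeas)
    also have "\<dots> \<le> (\<Sum>K\<in>\<D>'. 2 * integral K h)"
      by (intro sum_mono Ile)
    also have "\<dots> = 2 * integral (\<Union>\<D>') h"
    proof -
      have hK: "(h has_integral (integral K h)) K" if "K \<in> \<D>'" for K
      proof -
        have "K \<in> \<D>" using that \<open>\<D>' \<subseteq> \<D>\<close> by blast
        then obtain c d where K: "K = cbox c d" "K \<subseteq> cbox \<alpha> \<beta>"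
          using D(2) by blast
        then have "h integrable_on K" using integrable_on_subcbox[OF hint[unfolded box_real(2)[symmetric]]] by blast
        then show ?thesis by (rule integrable_integral)
      qed
      have negl: "pairwise (\<lambda>S S'. negligible (S \<inter> S')) \<D>'"
        unfolding pairwise_def
      proof (intro ballI impI)
        fix K L assume KL: "K \<in> \<D>'" "L \<in> \<D>'" "K \<noteq> L"
        have iKL0: "interior K \<inter> interior L = {}"
          using D(3) KL \<open>\<D>' \<subseteq> \<D>\<close> unfolding pairwise_def by blast
        have "K \<in> \<D>" "L \<in> \<D>" using KL \<open>\<D>' \<subseteq> \<D>\<close> by blast+
        moreover obtain u v where "K = cbox u v" using D(2)[OF \<open>K \<in> \<D>\<close>] by blast
        moreover obtain x y where "L = cbox x y" using D(2)[OF \<open>L \<in> \<D>\<close>] by blast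
        ultimately have K: "K = {u..v}" "L = {x..y}" and iKL: "{u<..<v} \<inter> {x<..<y} = {}" using iKL0 by auto
        then have "\<not> max u x < min v y"
          by (metis (no_types, lifting) Int_iff dense empty_iff greaterThanLessThan_iff max_less_iff_conj min_less_iff_conj)
        then have "K \<inter> L \<subseteq> {max u x}" using K by auto
        then show "negligible (K \<inter> L)" using negligible_subset negligible_sing by blast
      qed
      have "(h has_integral (\<Sum>K\<in>\<D>'. integral K h)) (\<Union>\<D>')"
        by (rule has_integral_Union[OF \<open>finite \<D>'\<close> hK negl])
      then show ?thesis by (simp add: integral_unique sum_distrib_left)
    qed
    also have "\<dots> \<le> 2 * integral (\<Union>\<D>) h"
    proof -
      have "(\<Union>\<D>') \<in> sets lebesgue"
        using \<open>finite \<D>'\<close> \<open>\<D>' \<subseteq> \<D>\<close> D(2)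
        using Dsets by (intro sets.finite_Union) auto
      then have "h integrable_on \<Union>\<D>'"
        using set_lebesgue_integral_eq_integral(1)[OF set_integrable_subset[OF hI \<open>(\<Union>\<D>') \<in> sets lebesgue\<close>]] that UDs by blast
      then show ?thesis
        using hUD h0 that by (simp add: Sup_subset_mono integral_subset_le)
    qed
    finally show ?thesis using UDint by linarith
  qed
  show "\<exists>T. \<phi> ` E \<subseteq> T \<and> T \<in> lmeasurable \<and> measure lebesgue T \<le> e"
  proof (intro exI conjI)
    show "\<phi> ` E \<subseteq> (\<Union>K\<in>\<D>. I K)" using D(6) KI by blast
    show "(\<Union>K\<in>\<D>. I K) \<in> lmeasurable"
      by (rule fmeasurable_UN_bound[OF D(1) Imeas fin])
    show "measure lebesgue (\<Union>K\<in>\<D>. I K) \<le> e"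
      by (rule measure_UN_bound[OF D(1) Imeas fin])
  qed
qed



lemma per_nat:
  assumes per: "\<And>x. f (x + 1) = f x"
  shows "f (x + real n) = f x"
proof (induction n)
  case (Suc n)
  have "f (x + real (Suc n)) = f ((x + real n) + 1)" by (simp add: algebra_simps)
  then show ?case using per Suc by simp
qed simp

lemma per_integrable:
  fixes g :: "real \<Rightarrow> 'b::banach"
  assumes per: "\<And>x. g (x + 1) = g x" and gi: "g integrable_on {0..1}"
  shows "g integrable_on {0..real n}"
proof (induction n)
  case 0 then show ?case using integrable_on_refl[of g "0::real"] by simp
next
  case (Suc n)
  have "g \<circ> (+) (real n) = g" by (rule ext) (simp add: per_nat[of g, OF per] add.commute)
  then have "g integrable_on {0 + real n .. 1 + real n}"
    using integrable_on_shift_Icc_real[of g "real n" 0 1] gi by simp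
  then have "g integrable_on {real n .. real (Suc n)}" by (simp add: add.commute)
  then show ?case
    using Henstock_Kurzweil_Integration.integrable_combine[of 0 "real n" "real (Suc n)" g] Suc by simp
qed

lemma per_abs_integrable:
  fixes g :: "real \<Rightarrow> 'b::euclidean_space"
  assumes per: "\<And>x. g (x + 1) = g x" and gi: "g absolutely_integrable_on {0..1}"
  shows "0 \<le> a \<Longrightarrow> g absolutely_integrable_on {a..b}"
proof -
  assume a: "0 \<le> a"
  obtain n where n: "b \<le> real n" using real_arch_simple by blast
  have "g integrable_on {0..real n}"
    using per_integrable[of g, OF per] gi absolutely_integrable_on_def by blast
  moreover have "(\<lambda>x. norm (g x)) integrable_on {0..real n}"
    using per_integrable[of "\<lambda>x. norm (g x)"] per gi absolutely_integrable_on_def by auto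
  ultimately have "g absolutely_integrable_on {0..real n}"
    using absolutely_integrable_on_def by blast
  then show ?thesis
    by (rule absolutely_integrable_on_subinterval) (use a n in auto)
qed



lemma per_shift_nat:
  fixes \<phi> :: "real \<Rightarrow> real"
  assumes per: "\<And>t. t \<ge> 0 \<Longrightarrow> \<phi> (t + 1) = \<phi> t + m"
  shows "t \<ge> 0 \<Longrightarrow> \<phi> (t + real n) = \<phi> t + real n * m"
proof (induction n)
  case 0 then show ?case by simp
next
  case (Suc n)
  have "\<phi> (t + real (Suc n)) = \<phi> ((t + real n) + 1)" by (simp add: algebra_simps)
  also have "\<dots> = \<phi> (t + real n) + m" using Suc.prems by (intro per) simp
  finally show ?case using Suc by (simp add: algebra_simps)
qed

lemma rising_sun:
  fixes \<phi> :: "real \<Rightarrow> real"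
  assumes cont: "\<And>b. continuous_on {0..b} \<phi>"
    and per: "\<And>t. t \<ge> 0 \<Longrightarrow> \<phi> (t + 1) = \<phi> t + m" and m: "m < 0"
  defines "S \<equiv> {a. 0 \<le> a \<and> (\<forall>t>a. \<phi> t < \<phi> a)}"
  obtains s0 where "s0 \<in> S" "{\<phi> s0 + m .. \<phi> s0} \<subseteq> \<phi> ` (S \<inter> {s0..s0+1})"
proof -
  have contI: "continuous_on {a..b} \<phi>" if "0 \<le> a" for a b
    using continuous_on_subset[OF cont[of b]] that by auto
  have clZ: "closed {t \<in> {a..b}. \<phi> t = v}" if "0 \<le> a" for a b v
    using continuous_closed_preimage_constant[OF contI[OF that]] by simp
  have shift: "a + 1 \<in> S" if "a \<in> S" for a
  proof -
    have "\<phi> t < \<phi> (a + 1)" if t: "t > a + 1" for t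
    proof -
      have "\<phi> t = \<phi> (t - 1) + m" using per[of "t - 1"] t \<open>a \<in> S\<close> by (simp add: S_def)
      also have "\<phi> (t - 1) < \<phi> a" using \<open>a \<in> S\<close> t by (simp add: S_def)
      also have "\<phi> a + m = \<phi> (a + 1)" using per[of a] \<open>a \<in> S\<close> by (simp add: S_def)
      finally show ?thesis by simp
    qed
    then show ?thesis using that by (simp add: S_def)
  qed
  obtain x where x: "x \<in> {0..1}" "\<And>y. y \<in> {0..1} \<Longrightarrow> \<phi> y \<le> \<phi> x"
    using continuous_attains_sup[OF compact_Icc _ contI[of 0 1]] by auto
  define Z where "Z = {t \<in> {0..1}. \<phi> t = \<phi> x}"
  have Zne: "Z \<noteq> {}" using x by (auto simp: Z_def)
  have Zb: "bdd_above Z" by (auto simp: Z_def bdd_above_def)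
  define s0 where "s0 = Sup Z"
  have s0Z: "s0 \<in> Z" unfolding s0_def using closed_contains_Sup[OF Zne Zb] clZ[of 0 1 "\<phi> x"] by (simp add: Z_def)
  have s0S: "s0 \<in> S"
  proof -
    have "\<phi> t < \<phi> s0" if t: "t > s0" for t
    proof (cases "t \<le> 1")
      case True
      then have "t \<in> {0..1}" using t s0Z by (auto simp: Z_def)
      moreover have "t \<notin> Z" using t cSup_upper[OF _ Zb] s0_def by force
      ultimately show ?thesis using x(2)[of t] s0Z by (auto simp: Z_def)
    next
      case False
      define n where "n = nat \<lfloor>t\<rfloor>"
      have n1: "real n \<ge> 1" using False by (simp add: n_def)
      have tn: "t - real n \<in> {0..1}" using False by (simp add: n_def) linarith
      have "\<phi> t = \<phi> ((t - real n) + real n)" by simp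
      also have "\<dots> = \<phi> (t - real n) + real n * m" using per_shift_nat[of \<phi> m, OF per, of "t - real n" n] tn by simp
      also have "\<dots> \<le> \<phi> x + real n * m" using x(2)[OF tn] by simp
      also have "\<dots> < \<phi> x" using n1 m by (simp add: mult_pos_neg)
      finally show ?thesis using s0Z by (simp add: Z_def)
    qed
    then show ?thesis using s0Z by (simp add: S_def Z_def)
  qed
  have lev: "v \<in> \<phi> ` (S \<inter> {s0..s0+1})" if v: "v \<in> {\<phi> s0 + m .. \<phi> s0}" for v
  proof -
    have s00: "0 \<le> s0" using s0S by (simp add: S_def)
    have p1: "\<phi> (s0 + 1) = \<phi> s0 + m" using per s00 by simp
    define Y where "Y = {t \<in> {s0..s0+1}. \<phi> t = v}"
    have Yne: "Y \<noteq> {}"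
      using IVT2'[of \<phi> "s0+1" v s0] v p1 contI[OF s00, of "s0+1"] by (auto simp: Y_def)
    have Yb: "bdd_above Y" by (auto simp: Y_def bdd_above_def)
    define a where "a = Sup Y"
    have aY: "a \<in> Y" unfolding a_def using closed_contains_Sup[OF Yne Yb] clZ[OF s00, of "s0+1" v] by (simp add: Y_def)
    have "\<phi> t < \<phi> a" if t: "t > a" for t
    proof (cases "t \<le> s0 + 1")
      case True
      have tY: "t \<notin> Y" using t cSup_upper[OF _ Yb] a_def by force
      have ts: "t \<ge> s0" using t aY by (auto simp: Y_def)
      show ?thesis
      proof (rule ccontr)
        assume "\<not> \<phi> t < \<phi> a"
        then have "\<phi> t \<ge> v" using aY by (simp add: Y_def)
        then obtain t' where "t' \<in> {t..s0+1}" "\<phi> t' = v"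
          using IVT2'[of \<phi> "s0+1" v t] v p1 True contI[of t "s0+1"] ts s00 by auto
        then have "t' \<in> Y" using ts by (auto simp: Y_def)
        then have "t' \<le> a" using cSup_upper[OF _ Yb] a_def by simp
        then show False using \<open>t' \<in> {t..s0+1}\<close> t by simp
      qed
    next
      case False
      have "\<phi> t < \<phi> (s0 + 1)" using shift[OF s0S] False by (simp add: S_def)
      also have "\<phi> (s0 + 1) \<le> v" using p1 v by simp
      finally show ?thesis using aY by (simp add: Y_def)
    qed
    then have "a \<in> S" using aY s00 by (simp add: S_def Y_def)
    then show ?thesis using aY by (auto simp: Y_def)
  qed
  show ?thesis using that s0S lev by blast
qed


theorem theorem1:
  fixes OmO OmI :: "'a::euclidean_space set" and psi :: "real \<Rightarrow> 'a"
  assumes "standing_assumptions OmO OmI"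
    and "psi \<in> A_circ OmO OmI"
  shows "average {0..1} psi \<notin> interior (convex hull OmI)"
proof
  assume x0I: "average {0..1} psi \<in> interior (convex hull OmI)"
  have per: "\<And>x. psi (x + 1) = psi x" and ai: "psi absolutely_integrable_on {0..1}"
    and fr: "\<And>x. psi x \<in> frontier OmO" and av: "\<And>a b. a < b \<Longrightarrow> average {a..b} psi \<notin> OmI"
    using assms(2) unfolding A_circ_def by auto
  have opO: "open OmO" and clO: "closure (convex hull OmI) \<subseteq> OmO"
    and A5: "\<forall>w \<in> components (interior (convex hull OmI) - OmI).
        \<exists>L. supporting_hyperplane (convex hull OmI) L \<and> frontier w - OmI \<subseteq> L"
    using assms(1) unfolding standing_assumptions_def by auto
  have aiI: "\<And>a b. 0 \<le> a \<Longrightarrow> psi absolutely_integrable_on {a..b}"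
    using per_abs_integrable[of psi, OF per ai] by blast
  have iI: "\<And>a b. 0 \<le> a \<Longrightarrow> psi integrable_on {a..b}"
    using aiI set_lebesgue_integral_eq_integral(1) by blast
  define F where "F = (\<lambda>t. integral {0..t} psi)"
  have Fdiff: "integral {x..y} psi = F y - F x" if "0 \<le> x" "x \<le> y" for x y
    using Henstock_Kurzweil_Integration.integral_combine[of 0 x y psi] iI[of 0 y] that
    by (simp add: F_def algebra_simps)
  have avg: "average {a..a+s} psi = (1/s) *\<^sub>R integral {a..a+s} psi" if "0 < s" for a s
    using that by (simp add: average_def)
  have shift1: "integral {1..a+1} psi = F a" if "0 \<le> a" for a
  proof -
    have "psi \<circ> (+) 1 = psi" by (rule ext) (simp add: per add.commute)
    then show ?thesis using integral_shift_Icc_real[of 0 a psi 1] by (simp add: F_def add.commute)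
  qed
  have Fper: "F (a + 1) = F 1 + F a" if "0 \<le> a" for a
    using Fdiff[of 1 "a+1"] shift1[OF that] that by simp
  define x0 where "x0 = average {0..1} psi"
  have x0F: "x0 = F 1" by (simp add: x0_def average_def F_def)
  define IC where "IC = interior (convex hull OmI)"
  have x0n: "x0 \<notin> OmI" using av[of 0 1] by (simp add: x0_def)
  have x0IC: "x0 \<in> IC - OmI" using x0I x0n by (simp add: IC_def x0_def)
  define \<omega> where "\<omega> = connected_component_set (IC - OmI) x0"
  have \<omega>c: "\<omega> \<in> components (IC - OmI)" using componentsI[OF x0IC] by (simp add: \<omega>_def)
  have x0\<omega>: "x0 \<in> \<omega>" using x0IC by (simp add: \<omega>_def)
  have \<omega>sub: "\<omega> \<subseteq> IC" using connected_component_subset[of "IC - OmI" x0] by (auto simp: \<omega>_def)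
  obtain L where L: "supporting_hyperplane (convex hull OmI) L" "frontier \<omega> - OmI \<subseteq> L"
    using A5 \<omega>c by (auto simp: IC_def)
  obtain l b where lb: "l \<noteq> 0" "L = {y. l \<bullet> y = b}" "\<forall>y\<in>convex hull OmI. l \<bullet> y \<le> b"
    using L(1) unfolding supporting_hyperplane_def by blast
  have ICh: "IC \<subseteq> {y. l \<bullet> y < b}"
  proof -
    have "IC \<subseteq> interior {y. l \<bullet> y \<le> b}" unfolding IC_def using lb(3) by (intro interior_mono) auto
    then show ?thesis using interior_halfspace_le[OF lb(1)] by simp
  qed
  define m where "m = l \<bullet> x0 - b"
  have m0: "m < 0" using x0IC ICh by (auto simp: m_def)
  define \<phi> where "\<phi> = (\<lambda>t. l \<bullet> F t - b * t)"
  have \<phi>diff: "\<phi> (a + s) - \<phi> a = s * (l \<bullet> average {a..a+s} psi - b)" if "0 \<le> a" "0 < s" for a s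
  proof -
    have "F (a + s) - F a = s *\<^sub>R average {a..a+s} psi"
      using Fdiff[of a "a+s"] avg[of s a] that by simp
    then show ?thesis by (simp add: \<phi>_def algebra_simps inner_diff_right[symmetric])
  qed
  have \<phi>per: "\<phi> (t + 1) = \<phi> t + m" if "0 \<le> t" for t
    using Fper[OF that] by (simp add: \<phi>_def m_def x0F inner_add_right algebra_simps)
  have Fcont: "continuous_on {0..T} F" for T
    unfolding F_def by (rule indefinite_integral_continuous_1[OF iI]) simp
  have \<phi>cont: "continuous_on {0..T} \<phi>" for T
    unfolding \<phi>_def by (intro continuous_intros Fcont)
  define S where "S = {a. 0 \<le> a \<and> (\<forall>t>a. \<phi> t < \<phi> a)}"
  obtain s0 where s0: "s0 \<in> S" "{\<phi> s0 + m .. \<phi> s0} \<subseteq> \<phi> ` (S \<inter> {s0..s0+1})"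
    using rising_sun[of \<phi> m, OF \<phi>cont \<phi>per m0] unfolding S_def by blast
  have K1: "average {a..a+s} psi \<in> \<omega>" if aS: "a \<in> S" and s: "s \<in> {0<..1}" for a s
  proof (rule ccontr)
    assume nin: "average {a..a+s} psi \<notin> \<omega>"
    have a0: "0 \<le> a" using aS by (simp add: S_def)
    define P where "P = (\<lambda>s. average {a..a+s} psi) ` {0<..1}"
    have contP: "continuous_on {0<..1} (\<lambda>s. average {a..a+s} psi)"
    proof -
      have c1: "continuous_on {0<..1} (\<lambda>s. F (a + s))"
        by (rule continuous_on_compose2[OF Fcont[of "a+1"]]) (use a0 in \<open>auto intro!: continuous_intros\<close>)
      have "continuous_on {0<..1} (\<lambda>s. (1/s) *\<^sub>R (F (a + s) - F a))"
        by (intro continuous_intros c1) auto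
      then show ?thesis
        by (rule continuous_on_eq) (use a0 in \<open>auto simp: avg Fdiff\<close>)
    qed
    have cP: "connected P" unfolding P_def
      by (rule connected_continuous_image[OF contP]) (simp add: is_interval_connected)
    have x0P: "x0 \<in> P"
    proof -
      have "average {a..a+1} psi = F (a + 1) - F a" using avg[of 1 a] Fdiff[of a "a+1"] a0 by simp
      also have "\<dots> = x0" using Fper[OF a0] x0F by simp
      finally show ?thesis unfolding P_def using image_eqI[of x0 _ 1] by force
    qed
    have "P \<inter> \<omega> \<noteq> {}" using x0P x0\<omega> by blast
    moreover have "P - \<omega> \<noteq> {}" using nin s unfolding P_def by blast
    ultimately have "P \<inter> frontier \<omega> \<noteq> {}" using connected_Int_frontier[OF cP] by blast
    then obtain s' where s': "s' \<in> {0<..1}" "average {a..a+s'} psi \<in> frontier \<omega>"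
      unfolding P_def by blast
    have "average {a..a+s'} psi \<notin> OmI" using av[of a "a+s'"] s' by simp
    then have "average {a..a+s'} psi \<in> L" using s'(2) L(2) by blast
    then have "l \<bullet> average {a..a+s'} psi = b" using lb(2) by simp
    then have "\<phi> (a + s') = \<phi> a" using \<phi>diff[OF a0, of s'] s' by simp
    moreover have "\<phi> (a + s') < \<phi> a" using aS s' by (simp add: S_def)
    ultimately show False by simp
  qed
  define f0 where "f0 = (\<lambda>x. if 0 \<le> x then psi x else 0)"
  have f0i: "f0 integrable_on cbox u v" for u v :: real
  proof -
    define c where "c = min u 0"
    define d where "d = max v 0"
    have "f0 integrable_on {c..0}"
    proof (rule integrable_spike_finite[of "{0}"])
      show "(\<lambda>x. 0) integrable_on {c..0}" by (rule integrable_0)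
    qed (auto simp: f0_def)
    moreover have "f0 integrable_on {0..d}"
      using iI[of 0 d] by (rule integrable_eq) (auto simp: f0_def)
    ultimately have "f0 integrable_on {c..d}"
      using Henstock_Kurzweil_Integration.integrable_combine[of c 0 d f0]
      by (simp add: c_def d_def)
    then have "f0 integrable_on {u..v}"
      by (rule integrable_on_subinterval) (auto simp: c_def d_def)
    then show ?thesis by simp
  qed
  obtain N where N: "negligible N"
    "\<And>x e. \<lbrakk>x \<notin> N; 0 < e\<rbrakk> \<Longrightarrow> \<exists>d>0. \<forall>h. 0 < h \<and> h < d \<longrightarrow>
        norm(integral (cbox x (x + h *\<^sub>R One)) f0 /\<^sub>R h ^ DIM(real) - f0 x) < e"
    using integrable_ccontinuous_explicit[of f0] f0i by blast
  have K2: "\<exists>d>0. \<forall>h. 0 < h \<and> h < d \<longrightarrow> norm (average {x..x+h} psi - psi x) < e"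
    if xN: "x \<notin> N" and xe: "0 < e" and xx0: "0 \<le> x" for x e
  proof -
    obtain d where d: "d > 0" "\<And>h. 0 < h \<and> h < d \<Longrightarrow>
        norm(integral (cbox x (x + h *\<^sub>R One)) f0 /\<^sub>R h ^ DIM(real) - f0 x) < e"
      using N(2)[OF xN xe] by blast
    have "norm (average {x..x+h} psi - psi x) < e" if h: "0 < h" "h < d" for h
    proof -
      have "integral {x..x+h} f0 = integral {x..x+h} psi"
        using \<open>0 \<le> x\<close> by (intro integral_cong) (simp add: f0_def)
      then show ?thesis using d(2)[OF conjI[OF h]] h \<open>0 \<le> x\<close>
        by (simp add: avg f0_def divide_inverse_commute)
    qed
    then show ?thesis using d(1) by blast
  qed
  have K3: "S \<subseteq> N"
  proof
    fix a assume aS: "a \<in> S"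
    show "a \<in> N"
    proof (rule ccontr)
      assume aN: "a \<notin> N"
      have a0: "0 \<le> a" using aS by (simp add: S_def)
      have "psi a \<in> closure \<omega>"
        unfolding closure_approachable
      proof (intro allI impI)
        fix e :: real assume e: "e > 0"
        obtain d where d: "d > 0" "\<And>h. 0 < h \<and> h < d \<Longrightarrow> norm (average {a..a+h} psi - psi a) < e"
          using K2[OF aN e a0] by blast
        define h where "h = min (d/2) 1"
        have h: "0 < h" "h < d" "h \<in> {0<..1}" using d(1) by (auto simp: h_def)
        show "\<exists>y\<in>\<omega>. dist y (psi a) < e"
          using K1[OF aS h(3)] d(2)[of h] h by (auto simp: dist_norm)
      qed
      moreover have "closure \<omega> \<subseteq> OmO"
      proof -
        have "\<omega> \<subseteq> convex hull OmI" using \<omega>sub interior_subset unfolding IC_def by blast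
        then have "closure \<omega> \<subseteq> closure (convex hull OmI)" by (rule closure_mono)
        then show ?thesis using clO by blast
      qed
      moreover have "psi a \<notin> OmO"
        using fr[of a] opO by (simp add: frontier_def interior_open)
      ultimately show False by blast
    qed
  qed
  \<comment> \<open>K4: absolute continuity contradiction\<close>
  have s00: "0 \<le> s0" using s0(1) by (simp add: S_def)
  define g where "g = (\<lambda>t. l \<bullet> psi t - b)"
  have gai: "g absolutely_integrable_on {s0..s0+1}"
  proof -
    have "((\<lambda>y. l \<bullet> y) \<circ> psi) absolutely_integrable_on {s0..s0+1}"
      using absolutely_integrable_linear[OF aiI[OF s00] bounded_linear_inner_right] .
    moreover have "(\<lambda>t. b) absolutely_integrable_on {s0..s0+1}" by simp
    ultimately show ?thesis unfolding g_def o_def by (rule set_integral_diff(1))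
  qed
  have hai: "(\<lambda>t. norm (g t)) absolutely_integrable_on {s0..s0+1}"
    using absolutely_integrable_norm[OF gai] by (simp add: o_def)
  have gint: "g integrable_on {x..y}" "(\<lambda>t. norm (g t)) integrable_on {x..y}"
    if "s0 \<le> x" "y \<le> s0 + 1" for x y
    using integrable_on_subinterval[OF set_lebesgue_integral_eq_integral(1)[OF gai]]
      integrable_on_subinterval[OF set_lebesgue_integral_eq_integral(1)[OF hai]] that by auto
  have bnd: "\<bar>\<phi> y - \<phi> x\<bar> \<le> integral {x..y} (\<lambda>t. norm (g t))"
    if "s0 \<le> x" "x \<le> y" "y \<le> s0 + 1" for x y
  proof -
    have x0': "0 \<le> x" using that s00 by simp
    have "integral {x..y} g = integral {x..y} (\<lambda>t. l \<bullet> psi t) - integral {x..y} (\<lambda>t. b)"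
    proof -
      have "(\<lambda>t. l \<bullet> psi t) integrable_on {x..y}"
        using integrable_linear[OF iI[OF x0'] bounded_linear_inner_right] by (simp add: o_def)
      then show ?thesis unfolding g_def by (intro integral_diff) auto
    qed
    also have "integral {x..y} (\<lambda>t. l \<bullet> psi t) = l \<bullet> integral {x..y} psi"
      using integral_linear[OF iI[OF x0'] bounded_linear_inner_right] by (simp add: o_def)
    also have "\<dots> = l \<bullet> (F y - F x)" using Fdiff[OF x0' that(2)] by simp
    finally have "\<phi> y - \<phi> x = integral {x..y} g"
      using that by (simp add: \<phi>_def inner_diff_right algebra_simps)
    then have "\<bar>\<phi> y - \<phi> x\<bar> = norm (integral {x..y} g)" by simp
    also have "\<dots> \<le> integral {x..y} (\<lambda>t. norm (g t))"
      using gint[OF that(1,3)] by (intro Henstock_Kurzweil_Integration.integral_norm_bound_integral) auto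
    finally show ?thesis .
  qed
  have En: "negligible (S \<inter> {s0..s0+1})" using negligible_subset[OF N(1)] K3 by blast
  have "negligible (\<phi> ` (S \<inter> {s0..s0+1}))"
    by (rule nprop[OF hai _ bnd _ En]) auto
  then have "negligible {\<phi> s0 + m .. \<phi> s0}" using s0(2) negligible_subset by blast
  moreover have "box (\<phi> s0 + m) (\<phi> s0) \<noteq> {}" using m0 by simp
  ultimately show False using negligible_interval(1)[of "\<phi> s0 + m" "\<phi> s0"] by simp
qed

end
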